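(* Let $d \ge 2$ and let $a_1, \dots, a_d > 0$ be arbitrary reals. Let \[ S = \left\{ x \in \mathbb{R}^d \,:\, x_1, \dots, x_d \ge 0,\ \frac{x_1}{a_1} + \cdots + \frac{x_d}{a_d} \le 1 \right\}, \] and for every $I \subseteq [d] = \{1, \dots, d\}$ let \[ C_I = \left\{ x \in \mathbb{R}^d \,:\, \sum_{i \in I} \frac{|x_i|}{a_i} \le 1,\ x_j = 0 \text{ for all } j \in [d] \setminus I \right\}. \] Then for every real $t > 0$, \[ \left| tS \cap \mathbb{Z}^d \right| = \frac{1}{2^d} \sum_{I \subseteq [d]} \left| tC_I \cap \mathbb{Z}^d \right|. \]
   Context: For a set $P \subseteq \mathbb{R}^d$ and $t>0$, $tP = \{tx : x \in P\}$, and $|\cdot|$ applied to a set denotes its cardinality. For $I = \emptyset$ the set $C_\emptyset$ is $\{0\}$. *)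

theory Defs
  imports "HOL-Analysis.Analysis"
begin

definition lattice :: "(real ^ 'n) set" where
  "lattice = {x. \<forall>i. x $ i \<in> \<int>}"

definition simplexS :: "('n \<Rightarrow> real) \<Rightarrow> (real ^ 'n) set" where
  "simplexS a = {x. (\<forall>i. x $ i \<ge> 0) \<and> (\<Sum>i\<in>UNIV. x $ i / a i) \<le> 1}"

definition crossC :: "('n \<Rightarrow> real) \<Rightarrow> 'n set \<Rightarrow> (real ^ 'n) set" where
  "crossC a I = {x. (\<Sum>i\<in>I. \<bar>x $ i\<bar> / a i) \<le> 1 \<and> (\<forall>j. j \<notin> I \<longrightarrow> x $ j = 0)}"

definition dilate :: "real \<Rightarrow> (real ^ 'n) set \<Rightarrow> (real ^ 'n) set" where
  "dilate t P = (\<lambda>x. t *\<^sub>R x) ` P"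

end

theory Submission
  imports Defs
begin

lemma memS:
  assumes "t > 0"
  shows "x \<in> dilate t (simplexS a) \<longleftrightarrow> (\<forall>i. x $ i \<ge> 0) \<and> (\<Sum>i\<in>UNIV. x $ i / a i) \<le> t"
proof
  assume "x \<in> dilate t (simplexS a)"
  then obtain y where y: "x = t *\<^sub>R y" "\<forall>i. y $ i \<ge> 0" "(\<Sum>i\<in>UNIV. y $ i / a i) \<le> 1"
    by (auto simp: dilate_def simplexS_def)
  have "(\<Sum>i\<in>UNIV. x $ i / a i) = t * (\<Sum>i\<in>UNIV. y $ i / a i)"
    by (simp add: y(1) sum_distrib_left)
  also have "\<dots> \<le> t" using y(3) assms by (simp add: mult_left_le)
  finally show "(\<forall>i. x $ i \<ge> 0) \<and> (\<Sum>i\<in>UNIV. x $ i / a i) \<le> t"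
    using y assms by simp
next
  assume h: "(\<forall>i. x $ i \<ge> 0) \<and> (\<Sum>i\<in>UNIV. x $ i / a i) \<le> t"
  define y where "y = (1/t) *\<^sub>R x"
  have xy: "x = t *\<^sub>R y" using assms by (simp add: y_def)
  have "(\<Sum>i\<in>UNIV. y $ i / a i) = (1/t) * (\<Sum>i\<in>UNIV. x $ i / a i)"
    by (simp add: y_def sum_distrib_left)
  also have "\<dots> \<le> 1" using h assms by (simp add: divide_le_eq_1)
  finally have "y \<in> simplexS a" using h assms by (simp add: simplexS_def y_def)
  then show "x \<in> dilate t (simplexS a)" using xy by (auto simp: dilate_def)
qed

lemma memC:
  assumes "t > 0"
  shows "x \<in> dilate t (crossC a I) \<longleftrightarrow> (\<Sum>i\<in>I. \<bar>x $ i\<bar> / a i) \<le> t \<and> (\<forall>j. j \<notin> I \<longrightarrow> x $ j = 0)"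
proof
  assume "x \<in> dilate t (crossC a I)"
  then obtain y where y: "x = t *\<^sub>R y" "(\<Sum>i\<in>I. \<bar>y $ i\<bar> / a i) \<le> 1" "\<forall>j. j \<notin> I \<longrightarrow> y $ j = 0"
    by (auto simp: dilate_def crossC_def)
  have "(\<Sum>i\<in>I. \<bar>x $ i\<bar> / a i) = t * (\<Sum>i\<in>I. \<bar>y $ i\<bar> / a i)"
    using assms by (simp add: y(1) sum_distrib_left abs_mult)
  also have "\<dots> \<le> t" using y(2) assms by (simp add: mult_left_le)
  finally show "(\<Sum>i\<in>I. \<bar>x $ i\<bar> / a i) \<le> t \<and> (\<forall>j. j \<notin> I \<longrightarrow> x $ j = 0)"
    using y assms by simp
next
  assume h: "(\<Sum>i\<in>I. \<bar>x $ i\<bar> / a i) \<le> t \<and> (\<forall>j. j \<notin> I \<longrightarrow> x $ j = 0)"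
  define y where "y = (1/t) *\<^sub>R x"
  have xy: "x = t *\<^sub>R y" using assms by (simp add: y_def)
  have "(\<Sum>i\<in>I. \<bar>y $ i\<bar> / a i) = (1/t) * (\<Sum>i\<in>I. \<bar>x $ i\<bar> / a i)"
    using assms by (simp add: y_def sum_distrib_left abs_mult)
  also have "\<dots> \<le> 1" using h assms by (simp add: divide_le_eq_1)
  finally have "y \<in> crossC a I" using h assms by (simp add: crossC_def y_def)
  then show "x \<in> dilate t (crossC a I)" using xy by (auto simp: dilate_def)
qed

lemma finite_box:
  fixes B :: "'n::finite \<Rightarrow> real"
  shows "finite (lattice \<inter> {x :: real^'n. \<forall>i. \<bar>x $ i\<bar> \<le> B i})"
proof -
  have "lattice \<inter> {x :: real^'n. \<forall>i. \<bar>x $ i\<bar> \<le> B i} \<subseteq>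
     (\<lambda>f. \<chi> i. real_of_int (f i)) ` (PiE UNIV (\<lambda>i. {-\<lceil>B i\<rceil>..\<lceil>B i\<rceil>}))"
  proof
    fix x :: "real^'n" assume x: "x \<in> lattice \<inter> {x. \<forall>i. \<bar>x $ i\<bar> \<le> B i}"
    then have "\<forall>i. \<exists>k. x $ i = real_of_int k" by (auto simp: lattice_def Ints_def)
    then obtain f where f: "\<forall>i. x $ i = real_of_int (f i)" by metis
    have b: "\<bar>real_of_int (f i)\<bar> \<le> B i" for i
    proof -
      have "\<bar>x $ i\<bar> \<le> B i" using x by blast
      then show ?thesis using f by simp
    qed
    have "f i \<in> {-\<lceil>B i\<rceil>..\<lceil>B i\<rceil>}" for i
    proof -
      have c: "B i \<le> real_of_int \<lceil>B i\<rceil>" by (rule le_of_int_ceiling)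
      have "real_of_int (f i) \<le> real_of_int \<lceil>B i\<rceil>" using b[of i] c by linarith
      then have 1: "f i \<le> \<lceil>B i\<rceil>" by (simp only: of_int_le_iff)
      have "real_of_int (- \<lceil>B i\<rceil>) \<le> real_of_int (f i)" using b[of i] c by (simp only: of_int_minus; linarith)
      then have 2: "- \<lceil>B i\<rceil> \<le> f i" by (simp only: of_int_le_iff)
      show ?thesis using 1 2 by simp
    qed
    then have "f \<in> PiE UNIV (\<lambda>i. {-\<lceil>B i\<rceil>..\<lceil>B i\<rceil>})" by auto
    moreover have "x = (\<chi> i. real_of_int (f i))" using f by (simp add: vec_eq_iff)
    ultimately show "x \<in> (\<lambda>f. \<chi> i. real_of_int (f i)) ` (PiE UNIV (\<lambda>i. {-\<lceil>B i\<rceil>..\<lceil>B i\<rceil>}))"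
      by blast
  qed
  moreover have "finite (PiE (UNIV::'n set) (\<lambda>i. {-\<lceil>B i\<rceil>..\<lceil>B i\<rceil>}))"
    by (intro finite_PiE) auto
  ultimately show ?thesis by (meson finite_imageI finite_subset)
qed

theorem proposition1:
  fixes a :: "'n::finite \<Rightarrow> real" and t :: real
  assumes "CARD('n) \<ge> 2"
    and "\<And>i. a i > 0"
    and "t > 0"
  shows "real (card (dilate t (simplexS a) \<inter> lattice)) =
           (1 / 2 ^ CARD('n)) *
           (\<Sum>I\<in>Pow (UNIV :: 'n set). real (card (dilate t (crossC a I) \<inter> lattice)))"
proof -
  have apos: "a i > 0" for i using assms(2) .
  define SL where "SL = dilate t (simplexS a) \<inter> lattice"
  define CL where "CL I = dilate t (crossC a I) \<inter> lattice" for I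
  have SLm: "x \<in> SL \<longleftrightarrow> x \<in> lattice \<and> (\<forall>i. x $ i \<ge> 0) \<and> (\<Sum>i\<in>UNIV. x $ i / a i) \<le> t" for x
    using memS[OF assms(3)] by (auto simp: SL_def)
  have CLm: "x \<in> CL I \<longleftrightarrow> x \<in> lattice \<and> (\<Sum>i\<in>I. \<bar>x $ i\<bar> / a i) \<le> t \<and> (\<forall>j. j \<notin> I \<longrightarrow> x $ j = 0)" for x I
    using memC[OF assms(3)] by (auto simp: CL_def)
  have SLb: "SL \<subseteq> lattice \<inter> {x. \<forall>i. \<bar>x $ i\<bar> \<le> t * a i}"
  proof
    fix x assume x: "x \<in> SL"
    have "\<bar>x $ i\<bar> \<le> t * a i" for i
    proof -
      have "x $ i / a i \<le> (\<Sum>j\<in>UNIV. x $ j / a j)"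
        by (rule member_le_sum) (use x SLm apos in \<open>auto intro: divide_nonneg_pos\<close>)
      also have "\<dots> \<le> t" using x SLm by auto
      finally have "x $ i \<le> t * a i" using apos[of i] by (simp add: divide_le_eq)
      then show ?thesis using x SLm by auto
    qed
    then show "x \<in> lattice \<inter> {x. \<forall>i. \<bar>x $ i\<bar> \<le> t * a i}" using x SLm by auto
  qed
  have finS: "finite SL" using finite_subset[OF SLb finite_box] .
  have CLb: "CL I \<subseteq> lattice \<inter> {x. \<forall>i. \<bar>x $ i\<bar> \<le> t * a i}" for I
  proof
    fix x assume x: "x \<in> CL I"
    have "\<bar>x $ i\<bar> \<le> t * a i" for i
    proof (cases "i \<in> I")
      case True
      have "\<bar>x $ i\<bar> / a i \<le> (\<Sum>j\<in>I. \<bar>x $ j\<bar> / a j)"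
        by (rule member_le_sum) (use True apos in \<open>auto intro: divide_nonneg_pos\<close>)
      also have "\<dots> \<le> t" using x CLm by auto
      finally show ?thesis using apos[of i] by (simp add: divide_le_eq)
    next
      case False
      then show ?thesis using x CLm apos[of i] assms(3) by simp
    qed
    then show "x \<in> lattice \<inter> {x. \<forall>i. \<bar>x $ i\<bar> \<le> t * a i}" using x CLm by auto
  qed
  have finC: "finite (CL I)" for I using finite_subset[OF CLb finite_box] .
  define g where "g = (\<lambda>(y::real^'n, \<sigma>::'n set). ({i. y $ i \<noteq> 0} \<union> \<sigma>,
      \<chi> i. if i \<in> \<sigma> then - (y $ i) else y $ i))"
  define h where "h = (\<lambda>(I::'n set, x::real^'n). (\<chi> i. \<bar>x $ i\<bar>,
      {i. x $ i < 0} \<union> (I - {i. x $ i \<noteq> 0})))"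
  have latneg: "(\<chi> i. if i \<in> \<sigma> then - (y $ i) else y $ i) \<in> lattice" if "y \<in> lattice" for y :: "real^'n" and \<sigma>
    using that by (auto simp: lattice_def)
  have latabs: "(\<chi> i. \<bar>x $ i\<bar>) \<in> lattice" if "x \<in> lattice" for x :: "real^'n"
    using that by (auto simp: lattice_def)
  have bij: "bij_betw g (SL \<times> Pow (UNIV::'n set)) (Sigma (Pow (UNIV::'n set)) CL)"
  proof (rule bij_betw_byWitness[where f'=h])
    show "\<forall>p\<in>SL \<times> Pow (UNIV::'n set). h (g p) = p"
    proof
      fix p assume p: "p \<in> SL \<times> Pow (UNIV::'n set)"
      obtain y \<sigma> where pe: "p = (y, \<sigma>::'n set)" by force
      have y: "\<forall>i. y $ i \<ge> 0" using p pe SLm by auto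
      define x' where "x' = (\<chi> i. if i \<in> \<sigma> then - (y $ i) else y $ i)"
      have gp: "g p = ({i. y $ i \<noteq> 0} \<union> \<sigma>, x')" by (simp add: pe g_def x'_def)
      have xi: "x' $ i = (if i \<in> \<sigma> then - (y $ i) else y $ i)" for i by (simp add: x'_def)
      have e1: "(\<chi> i. \<bar>x' $ i\<bar>) = y"
        unfolding vec_eq_iff using y by (simp add: xi)
      have e2: "{i. x' $ i < 0} \<union> (({i. y $ i \<noteq> 0} \<union> \<sigma>) - {i. x' $ i \<noteq> 0}) = \<sigma>"
      proof (intro set_eqI iffI)
        fix i assume "i \<in> {i. x' $ i < 0} \<union> (({i. y $ i \<noteq> 0} \<union> \<sigma>) - {i. x' $ i \<noteq> 0})"
        then show "i \<in> \<sigma>" using y[rule_format, of i] by (auto simp: xi split: if_splits)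
      next
        fix i assume "i \<in> \<sigma>"
        then show "i \<in> {i. x' $ i < 0} \<union> (({i. y $ i \<noteq> 0} \<union> \<sigma>) - {i. x' $ i \<noteq> 0})"
          using y[rule_format, of i] by (auto simp: xi)
      qed
      show "h (g p) = p" unfolding gp by (simp add: h_def pe e1 e2)
    qed
    show "\<forall>p\<in>Sigma (Pow (UNIV::'n set)) CL. g (h p) = p"
    proof
      fix p assume p: "p \<in> Sigma (Pow (UNIV::'n set)) CL"
      obtain I x where pe: "p = (I, x::real^'n)" by force
      have x: "\<forall>j. j \<notin> I \<longrightarrow> x $ j = 0" using p pe CLm by auto
      define \<sigma> where "\<sigma> = {i. x $ i < 0} \<union> (I - {i. x $ i \<noteq> 0})"
      have hp: "h p = ((\<chi> i. \<bar>x $ i\<bar>), \<sigma>)" by (simp add: pe h_def \<sigma>_def)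
      have e1: "{i. x $ i \<noteq> 0} \<union> \<sigma> = I"
        using x by (auto simp: \<sigma>_def)
      have e2: "(\<chi> i. if i \<in> \<sigma> then - ((\<chi> i. \<bar>x $ i\<bar>) $ i) else (\<chi> i. \<bar>x $ i\<bar>) $ i) = x"
        unfolding vec_eq_iff by (auto simp: \<sigma>_def)
      show "g (h p) = p" unfolding hp by (simp add: g_def pe e1 e2)
    qed
    show "g ` (SL \<times> Pow (UNIV::'n set)) \<subseteq> Sigma (Pow (UNIV::'n set)) CL"
    proof
      fix q assume "q \<in> g ` (SL \<times> Pow (UNIV::'n set))"
      then obtain y \<sigma> where y: "y \<in> SL" and q: "q = g (y, \<sigma>)" by auto
      define I where "I = {i. y $ i \<noteq> 0} \<union> \<sigma>"
      define x where "x = (\<chi> i. if i \<in> \<sigma> then - (y $ i) else y $ i)"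
      have yl: "y \<in> lattice" "\<forall>i. y $ i \<ge> 0" "(\<Sum>i\<in>UNIV. y $ i / a i) \<le> t" using y SLm by auto
      have "(\<Sum>i\<in>I. \<bar>x $ i\<bar> / a i) = (\<Sum>i\<in>I. y $ i / a i)"
        using yl by (intro sum.cong) (auto simp: x_def)
      also have "\<dots> \<le> (\<Sum>i\<in>UNIV. y $ i / a i)"
        by (rule sum_mono2) (use yl apos in \<open>auto intro: divide_nonneg_pos\<close>)
      finally have s: "(\<Sum>i\<in>I. \<bar>x $ i\<bar> / a i) \<le> t" using yl(3) by linarith
      have z: "\<forall>j. j \<notin> I \<longrightarrow> x $ j = 0" by (simp add: I_def x_def)
      have "x \<in> lattice" unfolding x_def by (rule latneg[OF yl(1)])
      then have xc: "x \<in> CL I" using s z CLm by blast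
      have "q = (I, x)" by (simp add: q g_def I_def x_def)
      then show "q \<in> Sigma (Pow (UNIV::'n set)) CL" using xc by simp
    qed
    show "h ` Sigma (Pow (UNIV::'n set)) CL \<subseteq> SL \<times> Pow (UNIV::'n set)"
    proof
      fix q assume "q \<in> h ` Sigma (Pow (UNIV::'n set)) CL"
      then obtain I x where x: "x \<in> CL I" and q: "q = h (I, x)" by auto
      have xl: "x \<in> lattice" "(\<Sum>i\<in>I. \<bar>x $ i\<bar> / a i) \<le> t" "\<forall>j. j \<notin> I \<longrightarrow> x $ j = 0"
        using x CLm by auto
      have "(\<Sum>i\<in>UNIV. \<bar>x $ i\<bar> / a i) = (\<Sum>i\<in>I. \<bar>x $ i\<bar> / a i)"
        by (rule sum.mono_neutral_right) (use xl in auto)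
      then have s: "(\<Sum>i\<in>UNIV. (\<chi> i. \<bar>x $ i\<bar>) $ i / a i) \<le> t" using xl(2) by simp
      have nn: "\<forall>i. (\<chi> i. \<bar>x $ i\<bar>) $ i \<ge> 0" by simp
      have "(\<chi> i. \<bar>x $ i\<bar>) \<in> lattice" by (rule latabs[OF xl(1)])
      then have "(\<chi> i. \<bar>x $ i\<bar>) \<in> SL" using s nn SLm by blast
      then show "q \<in> SL \<times> Pow (UNIV::'n set)" by (simp add: q h_def)
    qed
  qed
  have "card (Sigma (Pow (UNIV::'n set)) CL) = card (SL \<times> Pow (UNIV::'n set))"
    using bij_betw_same_card[OF bij] by simp
  also have "\<dots> = card SL * 2 ^ CARD('n)"
    by (simp add: card_cartesian_product card_Pow)
  finally have eq0: "card (Sigma (Pow (UNIV::'n set)) CL) = card SL * 2 ^ CARD('n)" .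
  have "card (Sigma (Pow (UNIV::'n set)) CL) = (\<Sum>I\<in>Pow (UNIV::'n set). card (CL I))"
    by (rule card_SigmaI) (auto simp: finC)
  with eq0 have eq: "(\<Sum>I\<in>Pow (UNIV::'n set). card (CL I)) = card SL * 2 ^ CARD('n)" by simp
  have "(\<Sum>I\<in>Pow (UNIV :: 'n set). real (card (CL I))) = real (card SL) * 2 ^ CARD('n)"
    using arg_cong[OF eq, of real] by (simp add: of_nat_sum)
  then have fin: "real (card SL) = (1 / 2 ^ CARD('n)) * (\<Sum>I\<in>Pow (UNIV :: 'n set). real (card (CL I)))"
    by simp
  show ?thesis using fin unfolding SL_def CL_def .
qed

end
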